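(* For every $d\ge0$, $\mathbf S_d\,\mathbf F_d\,\mathbf S_d^{-1}=\mathbf H_d$.
   Context: All matrices here have rows and columns indexed by $-1,0,\dots,d$. For integers $i,d\ge -1$ define $f_{-1,-1}=1$, $f_{-1,d}=0$ for $d\ge0$, $f_{i,-1}=0$ for $i\ge0$, and $f_{i,d}=(i+1)!\,S(d+1,i+1)$ for $i,d\ge0$, where $S(\cdot,\cdot)$ is the Stirling number of the second kind; $\mathbf F_d=(f_{i,j})_{-1\le i,j\le d}$. The shift matrix is $\mathbf S_d=\left((-1)^{d+1+i+j}\binom{d-j}{i+1}\right)_{-1\le i,j\le d}$. For $m\ge1$ and a permutation $\sigma$ of $[m]=\{1,\dots,m\}$, $\mathrm{des}(\sigma)$ is the number of $1\le t\le m-1$ with $\sigma(t)>\sigma(t+1)$; $A(m,i,j)$ is the number of permutations $\sigma$ of $[m]$ with $\mathrm{des}(\sigma)=i$ and $\sigma(1)=j$ (and $A(m,i,j)=0$ if $i<0$). Define $h^{(d)}_{i,j}=A(d+2,i+1,j+2)$ and $\mathbf H_d=(h^{(d)}_{i,j})_{-1\le i,j\le d}$. *)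

theory Defs
  imports "Jordan_Normal_Form.Matrix" "HOL-Combinatorics.Permutations" "HOL-Combinatorics.Stirling"
begin

(* Matrices are indexed in the paper by -1,0,...,d.  A paper index k corresponds to the
   Jordan_Normal_Form row/column index k+1 in {0..d+1}; matrices have size (d+2) x (d+2)
   and rational entries. *)

definition idx_mat :: "nat \<Rightarrow> (int \<Rightarrow> int \<Rightarrow> int) \<Rightarrow> rat mat" where
  "idx_mat d g = mat (d+2) (d+2) (\<lambda>(a,b). of_int (g (int a - 1) (int b - 1)))"

definition fcoef :: "int \<Rightarrow> int \<Rightarrow> int" where
  "fcoef i e = (if i = -1 \<and> e = -1 then 1
                else if i = -1 \<or> e = -1 then 0
                else int (fact (nat i + 1) * Stirling (nat e + 1) (nat i + 1)))"

definition F_mat :: "nat \<Rightarrow> rat mat" where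
  "F_mat d = idx_mat d fcoef"

definition S_mat :: "nat \<Rightarrow> rat mat" where
  "S_mat d = idx_mat d (\<lambda>i j. (if even (int d + 1 + i + j) then 1 else -1) * int ((nat (int d - j)) choose (nat (i + 1))))"

definition des :: "nat \<Rightarrow> (nat \<Rightarrow> nat) \<Rightarrow> nat" where
  "des m \<sigma> = card {t \<in> {1..m-1}. \<sigma> t > \<sigma> (t+1)}"

definition Acount :: "nat \<Rightarrow> int \<Rightarrow> int \<Rightarrow> nat" where
  "Acount m i j = (if i < 0 then 0 else
     card {\<sigma>. \<sigma> permutes {1..m} \<and> int (des m \<sigma>) = i \<and> int (\<sigma> 1) = j})"

definition H_mat :: "nat \<Rightarrow> rat mat" where
  "H_mat d = idx_mat d (\<lambda>i j. int (Acount (d+2) (i+1) (j+2)))"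

end

theory Submission
  imports Defs "Jordan_Normal_Form.Determinant" "HOL-Computational_Algebra.Polynomial"
begin


definition ins :: "nat \<Rightarrow> nat \<Rightarrow> (nat \<Rightarrow> nat) \<Rightarrow> (nat \<Rightarrow> nat)" where
  "ins m j \<tau> = (\<lambda>t. if t = 1 then j else if 2 \<le> t \<and> t \<le> m+1 then
      (if \<tau> (t-1) < j then \<tau> (t-1) else \<tau> (t-1) + 1) else t)"

definition del :: "nat \<Rightarrow> nat \<Rightarrow> (nat \<Rightarrow> nat) \<Rightarrow> (nat \<Rightarrow> nat)" where
  "del m j \<sigma> = (\<lambda>t. if 1 \<le> t \<and> t \<le> m then
      (if \<sigma> (t+1) < j then \<sigma> (t+1) else \<sigma> (t+1) - 1) else t)"

lemma ins_perm:
  assumes j: "1 \<le> j" "j \<le> m+1" and p: "\<tau> permutes {1..m}"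
  shows "ins m j \<tau> permutes {1..m+1}"
proof (rule bij_imp_permutes)
  have img: "\<And>x. \<tau> x \<in> {1..m} \<longleftrightarrow> x \<in> {1..m}" using permutes_in_image[OF p] by blast
  have inj: "\<And>x y. \<tau> x = \<tau> y \<Longrightarrow> x = y" using permutes_inj[OF p] by (simp add: inj_eq)
  have sub: "ins m j \<tau> ` {1..m+1} \<subseteq> {1..m+1}"
  proof
    fix y assume "y \<in> ins m j \<tau> ` {1..m+1}"
    then obtain t where t: "t \<in> {1..m+1}" "y = ins m j \<tau> t" by blast
    show "y \<in> {1..m+1}"
    proof (cases "t = 1")
      case True then show ?thesis using t j by (simp add: ins_def)
    next
      case False
      then have "t - 1 \<in> {1..m}" using t by auto
      then have "\<tau> (t-1) \<in> {1..m}" using img by blast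
      then show ?thesis using t False by (auto simp: ins_def)
    qed
  qed
  have "inj_on (ins m j \<tau>) {1..m+1}"
  proof (rule inj_onI)
    fix x y assume x: "x \<in> {1..m+1}" and y: "y \<in> {1..m+1}" and e: "ins m j \<tau> x = ins m j \<tau> y"
    show "x = y"
    proof (cases "x = 1")
      case True
      show ?thesis
      proof (rule ccontr)
        assume "x \<noteq> y"
        then have "y \<noteq> 1" "2 \<le> y" "y \<le> m+1" using True y by auto
        then show False using e True by (auto simp: ins_def split: if_splits)
      qed
    next
      case False
      show ?thesis
      proof (cases "y = 1")
        case True then show ?thesis using e False x by (auto simp: ins_def split: if_splits)
      next
        case F2: False
        then have "\<tau> (x-1) = \<tau> (y-1)" using e False x y by (auto simp: ins_def split: if_splits)
        then have "x - 1 = y - 1" by (rule inj)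
        then show ?thesis using False F2 x y by auto
      qed
    qed
  qed
  then show "bij_betw (ins m j \<tau>) {1..m+1} {1..m+1}"
    using sub endo_inj_surj[of "{1..m+1}"] by (simp add: bij_betw_def)
  show "\<And>x. x \<notin> {1..m+1} \<Longrightarrow> ins m j \<tau> x = x" by (auto simp: ins_def)
qed

lemma del_ins:
  assumes p: "\<tau> permutes {1..m}"
  shows "del m j (ins m j \<tau>) = \<tau>"
proof
  fix t
  show "del m j (ins m j \<tau>) t = \<tau> t"
  proof (cases "1 \<le> t \<and> t \<le> m")
    case True then show ?thesis by (auto simp: del_def ins_def)
  next
    case False then show ?thesis using permutes_not_in[OF p, of t] by (auto simp: del_def)
  qed
qed

lemma del_perm:
  assumes j: "1 \<le> j" "j \<le> m+1" and p: "\<sigma> permutes {1..m+1}" and s1: "\<sigma> 1 = j"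
  shows "del m j \<sigma> permutes {1..m}"
proof (rule bij_imp_permutes)
  have img: "\<And>x. \<sigma> x \<in> {1..m+1} \<longleftrightarrow> x \<in> {1..m+1}" using permutes_in_image[OF p] by blast
  have inj: "\<And>x y. \<sigma> x = \<sigma> y \<Longrightarrow> x = y" using permutes_inj[OF p] by (simp add: inj_eq)
  have ne: "\<And>t. 1 \<le> t \<Longrightarrow> \<sigma> (t+1) \<noteq> j" using inj s1 by force
  have sub: "del m j \<sigma> ` {1..m} \<subseteq> {1..m}"
  proof
    fix y assume "y \<in> del m j \<sigma> ` {1..m}"
    then obtain t where t: "t \<in> {1..m}" "y = del m j \<sigma> t" by blast
    have "\<sigma> (t+1) \<in> {1..m+1}" using img t by auto
    then show "y \<in> {1..m}" using t ne[of t] j by (auto simp: del_def)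
  qed
  have "inj_on (del m j \<sigma>) {1..m}"
  proof (rule inj_onI)
    fix x y assume x: "x \<in> {1..m}" and y: "y \<in> {1..m}" and e: "del m j \<sigma> x = del m j \<sigma> y"
    have "\<sigma> (x+1) \<noteq> j" "\<sigma> (y+1) \<noteq> j" using ne x y by auto
    then have "\<sigma> (x+1) = \<sigma> (y+1)" using e x y by (auto simp: del_def split: if_splits)
    then show "x = y" using inj by fastforce
  qed
  then show "bij_betw (del m j \<sigma>) {1..m} {1..m}"
    using sub endo_inj_surj[of "{1..m}"] by (simp add: bij_betw_def)
  show "\<And>x. x \<notin> {1..m} \<Longrightarrow> del m j \<sigma> x = x" by (auto simp: del_def)
qed

lemma ins_del:
  assumes j: "1 \<le> j" "j \<le> m+1" and p: "\<sigma> permutes {1..m+1}" and s1: "\<sigma> 1 = j"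
  shows "ins m j (del m j \<sigma>) = \<sigma>"
proof
  fix t
  have inj: "\<And>x y. \<sigma> x = \<sigma> y \<Longrightarrow> x = y" using permutes_inj[OF p] by (simp add: inj_eq)
  show "ins m j (del m j \<sigma>) t = \<sigma> t"
  proof (cases "2 \<le> t \<and> t \<le> m+1")
    case True
    then have "\<sigma> t \<noteq> j" using inj s1 by force
    then show ?thesis using True by (auto simp: del_def ins_def)
  next
    case False then show ?thesis using permutes_not_in[OF p, of t] s1 by (auto simp: ins_def)
  qed
qed

definition ev :: "nat \<Rightarrow> nat \<Rightarrow> nat" where "ev j x = (if x < j then x else x+1)"

lemma ev_less: "ev j x < ev j y \<longleftrightarrow> x < y"
  by (auto simp: ev_def)

lemma des_ins:
  assumes m: "1 \<le> m" and j: "1 \<le> j" "j \<le> m+1" and p: "\<tau> permutes {1..m}"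
  shows "des (m+1) (ins m j \<tau>) = des m \<tau> + (if \<tau> 1 < j then 1 else 0)"
proof -
  let ?s = "ins m j \<tau>"
  have s_eq: "\<And>t. 2 \<le> t \<Longrightarrow> t \<le> m+1 \<Longrightarrow> ?s t = ev j (\<tau> (t-1))"
    by (simp add: ins_def ev_def)
  have D: "{t \<in> {1..m}. ?s (t+1) < ?s t} = {t\<in>{1}. ?s (t+1) < ?s t} \<union> {t \<in> {2..m}. ?s (t+1) < ?s t}"
    using m by auto
  have A: "{t\<in>{1}. ?s (t+1) < ?s t} = (if \<tau> 1 < j then {1} else {})"
    using m by (auto simp: ins_def)
  have B: "{t \<in> {2..m}. ?s (t+1) < ?s t} = Suc ` {t \<in> {1..m-1}. \<tau> (t+1) < \<tau> t}"
  proof (rule Set.set_eqI)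
    fix x
    show "x \<in> {t \<in> {2..m}. ?s (t+1) < ?s t} \<longleftrightarrow> x \<in> Suc ` {t \<in> {1..m-1}. \<tau> (t+1) < \<tau> t}"
    proof
      assume x: "x \<in> {t \<in> {2..m}. ?s (t+1) < ?s t}"
      then have "?s (x+1) < ?s x" "2 \<le> x" "x \<le> m" by auto
      then have "\<tau> x < \<tau> (x-1)" using s_eq[of x] s_eq[of "x+1"] by (simp add: ev_less)
      then have "x - 1 \<in> {t \<in> {1..m-1}. \<tau> (t+1) < \<tau> t}" using x by auto
      moreover have "x = Suc (x-1)" using x by auto
      ultimately show "x \<in> Suc ` {t \<in> {1..m-1}. \<tau> (t+1) < \<tau> t}" by blast
    next
      assume "x \<in> Suc ` {t \<in> {1..m-1}. \<tau> (t+1) < \<tau> t}"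
      then obtain y where y: "y \<in> {1..m-1}" "\<tau> (y+1) < \<tau> y" "x = Suc y" by blast
      moreover have "y \<le> m" "Suc y \<le> m" using y by auto
      ultimately have "?s (x+1) < ?s x" using s_eq[of x] s_eq[of "x+1"] by (simp add: ev_less)
      then show "x \<in> {t \<in> {2..m}. ?s (t+1) < ?s t}" using y by auto
    qed
  qed
  have "des (m+1) ?s = card {t \<in> {1..m}. ?s (t+1) < ?s t}" by (simp add: des_def)
  also have "\<dots> = card {t\<in>{1}. ?s (t+1) < ?s t} + card {t \<in> {2..m}. ?s (t+1) < ?s t}"
    unfolding D by (rule card_Un_disjoint) auto
  also have "\<dots> = (if \<tau> 1 < j then 1 else 0) + card {t \<in> {1..m-1}. \<tau> (t+1) < \<tau> t}"
    unfolding A B by (simp add: card_image)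
  also have "card {t \<in> {1..m-1}. \<tau> (t+1) < \<tau> t} = des m \<tau>" by (simp add: des_def)
  finally show ?thesis by simp
qed



definition Cnt :: "nat \<Rightarrow> nat \<Rightarrow> nat \<Rightarrow> nat" where
  "Cnt m a j = card {\<sigma>. \<sigma> permutes {1..m} \<and> des m \<sigma> = a \<and> \<sigma> 1 = j}"

lemma Cnt_rec:
  assumes m: "1 \<le> m" and j: "1 \<le> j" "j \<le> m+1"
  shows "Cnt (m+1) a j = (\<Sum>j'\<in>{1..m}. if j' < j then (if a = 0 then 0 else Cnt m (a-1) j') else Cnt m a j')"
proof -
  let ?T = "{\<tau>. \<tau> permutes {1..(m::nat)}}"
  let ?c = "\<lambda>\<tau>::nat\<Rightarrow>nat. des m \<tau> + (if \<tau> 1 < j then 1 else 0)"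
  have fin: "finite ?T" by (rule finite_permutations) simp
  have eq: "{\<sigma>. \<sigma> permutes {1..m+1} \<and> des (m+1) \<sigma> = a \<and> \<sigma> 1 = j} = ins m j ` {\<tau>\<in>?T. ?c \<tau> = a}"
  proof (rule Set.set_eqI)
    fix \<sigma>
    show "\<sigma> \<in> {\<sigma>. \<sigma> permutes {1..m+1} \<and> des (m+1) \<sigma> = a \<and> \<sigma> 1 = j} \<longleftrightarrow> \<sigma> \<in> ins m j ` {\<tau>\<in>?T. ?c \<tau> = a}"
    proof
      assume s: "\<sigma> \<in> {\<sigma>. \<sigma> permutes {1..m+1} \<and> des (m+1) \<sigma> = a \<and> \<sigma> 1 = j}"
      then have p: "\<sigma> permutes {1..m+1}" "des (m+1) \<sigma> = a" "\<sigma> 1 = j" by auto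
      have dp: "del m j \<sigma> permutes {1..m}" using del_perm[OF j p(1) p(3)] .
      have id: "ins m j (del m j \<sigma>) = \<sigma>" using ins_del[OF j p(1) p(3)] .
      have c: "?c (del m j \<sigma>) = a" using des_ins[OF m j dp] id p(2) by simp
      show "\<sigma> \<in> ins m j ` {\<tau>\<in>?T. ?c \<tau> = a}" 
        by (rule image_eqI[of _ _ "del m j \<sigma>"]) (use dp id c in auto)
    next
      assume "\<sigma> \<in> ins m j ` {\<tau>\<in>?T. ?c \<tau> = a}"
      then obtain \<tau> where t: "\<tau> permutes {1..m}" "?c \<tau> = a" "\<sigma> = ins m j \<tau>" by blast
      show "\<sigma> \<in> {\<sigma>. \<sigma> permutes {1..m+1} \<and> des (m+1) \<sigma> = a \<and> \<sigma> 1 = j}"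
        using ins_perm[OF j t(1)] des_ins[OF m j t(1)] t by (simp add: ins_def)
    qed
  qed
  have inj: "inj_on (ins m j) {\<tau>\<in>?T. ?c \<tau> = a}"
    by (rule inj_on_inverseI[where g = "del m j"]) (simp add: del_ins)
  have "Cnt (m+1) a j = card {\<tau>\<in>?T. ?c \<tau> = a}"
    unfolding Cnt_def eq using inj by (simp add: card_image)
  also have "{\<tau>\<in>?T. ?c \<tau> = a} = (\<Union>j'\<in>{1..m}. {\<tau>\<in>?T. \<tau> 1 = j' \<and> ?c \<tau> = a})"
  proof -
    have "\<And>\<tau>. \<tau> \<in> ?T \<Longrightarrow> \<tau> 1 \<in> {1..m}"
    proof -
      fix \<tau> assume "\<tau> \<in> ?T"
      then have "\<tau> permutes {1..m}" by simp
      from permutes_in_image[OF this, of 1] show "\<tau> 1 \<in> {1..m}" using m by simp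
    qed
    then show ?thesis by blast
  qed
  also have "card \<dots> = (\<Sum>j'\<in>{1..m}. card {\<tau>\<in>?T. \<tau> 1 = j' \<and> ?c \<tau> = a})"
    by (rule card_UN_disjoint) (use fin in auto)
  also have "\<dots> = (\<Sum>j'\<in>{1..m}. if j' < j then (if a = 0 then 0 else Cnt m (a-1) j') else Cnt m a j')"
  proof (rule sum.cong[OF refl])
    fix j' assume "j' \<in> {1..m}"
    show "card {\<tau>\<in>?T. \<tau> 1 = j' \<and> ?c \<tau> = a} = (if j' < j then (if a = 0 then 0 else Cnt m (a-1) j') else Cnt m a j')"
    proof (cases "j' < j")
      case True
      show ?thesis
      proof (cases "a = 0")
        case True
        then have "{\<tau>\<in>?T. \<tau> 1 = j' \<and> ?c \<tau> = a} = {}" using \<open>j' < j\<close> by auto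
        then show ?thesis using True \<open>j' < j\<close> by simp
      next
        case False
        then have "{\<tau>\<in>?T. \<tau> 1 = j' \<and> ?c \<tau> = a} = {\<sigma>. \<sigma> permutes {1..m} \<and> des m \<sigma> = a-1 \<and> \<sigma> 1 = j'}"
          using \<open>j' < j\<close> by auto
        then show ?thesis using False \<open>j' < j\<close> by (simp add: Cnt_def)
      qed
    next
      case False
      then have "{\<tau>\<in>?T. \<tau> 1 = j' \<and> ?c \<tau> = a} = {\<sigma>. \<sigma> permutes {1..m} \<and> des m \<sigma> = a \<and> \<sigma> 1 = j'}"
        by auto
      then show ?thesis using False by (simp add: Cnt_def)
    qed
  qed
  finally show ?thesis .
qed

lemma des_le: "des m \<sigma> \<le> m - 1"
proof -
  have "des m \<sigma> \<le> card {1..m-1}" unfolding des_def by (rule card_mono) auto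
  then show ?thesis by simp
qed

lemma Cnt_big: assumes "m - 1 < a" shows "Cnt m a j = 0"
proof -
  have "\<And>\<sigma>. des m \<sigma> \<noteq> a" using des_le[of m] assms by (metis not_le)
  then show ?thesis unfolding Cnt_def by simp
qed

lemma Cnt_1: "Cnt 1 a j = (if a = 0 \<and> j = 1 then 1 else 0)"
proof -
  have d0: "des 1 id = 0" by (simp add: des_def)
  have "{\<sigma>. \<sigma> permutes {1..1::nat} \<and> des 1 \<sigma> = a \<and> \<sigma> 1 = j} = (if a = 0 \<and> j = 1 then {id} else {})"
    using d0 by auto
  then show ?thesis by (simp add: Cnt_def)
qed


lemma Stirling_binom_sum:
  "Stirling (Suc m) (Suc k) = (\<Sum>i\<le>m. (m choose i) * Stirling i k)"
proof (induction m arbitrary: k)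
  case 0
  then show ?case by (cases k) auto
next
  case (Suc m)
  have split: "(\<Sum>i\<le>Suc m. (Suc m choose i) * Stirling i k)
      = Stirling 0 k + (\<Sum>i\<le>m. (m choose i) * Stirling (Suc i) k)
                     + (\<Sum>i\<le>m. (m choose Suc i) * Stirling (Suc i) k)"
  proof -
    have "(\<Sum>i\<le>Suc m. (Suc m choose i) * Stirling i k) = (Suc m choose 0) * Stirling 0 k + (\<Sum>i\<le>m. (Suc m choose Suc i) * Stirling (Suc i) k)"
      by (rule sum.atMost_Suc_shift)
    also have "\<dots> = Stirling 0 k + (\<Sum>i\<le>m. (m choose i) * Stirling (Suc i) k + (m choose Suc i) * Stirling (Suc i) k)"
      by (simp only: binomial_Suc_Suc binomial_n_0 add_mult_distrib mult_1)
    finally show ?thesis by (simp only: sum.distrib add.assoc)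
  qed
  have t3: "Stirling 0 k + (\<Sum>i\<le>m. (m choose Suc i) * Stirling (Suc i) k)
      = (\<Sum>i\<le>m. (m choose i) * Stirling i k)"
  proof -
    have "(\<Sum>i\<le>Suc m. (m choose i) * Stirling i k) = Stirling 0 k + (\<Sum>i\<le>m. (m choose Suc i) * Stirling (Suc i) k)"
      by (simp only: sum.atMost_Suc_shift binomial_n_0 mult_1)
    moreover have "(\<Sum>i\<le>Suc m. (m choose i) * Stirling i k) = (\<Sum>i\<le>m. (m choose i) * Stirling i k)"
      by simp
    ultimately show ?thesis by simp
  qed
  have t2: "(\<Sum>i\<le>m. (m choose i) * Stirling (Suc i) k)
      = (if k = 0 then 0 else k * Stirling (Suc m) (Suc k) + Stirling (Suc m) k)"
  proof (cases k)
    case 0 then show ?thesis by simp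
  next
    case (Suc k')
    have "(\<Sum>i\<le>m. (m choose i) * Stirling (Suc i) k)
        = (\<Sum>i\<le>m. Suc k' * ((m choose i) * Stirling i (Suc k')) + (m choose i) * Stirling i k')"
      by (rule sum.cong) (simp_all add: Suc algebra_simps)
    also have "\<dots> = Suc k' * (\<Sum>i\<le>m. (m choose i) * Stirling i (Suc k')) + (\<Sum>i\<le>m. (m choose i) * Stirling i k')"
      by (simp add: sum.distrib sum_distrib_left)
    also have "\<dots> = Suc k' * Stirling (Suc m) (Suc (Suc k')) + Stirling (Suc m) (Suc k')"
      using Suc.IH[of "Suc k'"] Suc.IH[of k'] by simp
    finally show ?thesis using Suc by simp
  qed
  have "(\<Sum>i\<le>Suc m. (Suc m choose i) * Stirling i k)
     = Stirling (Suc m) (Suc k) + (if k = 0 then 0 else k * Stirling (Suc m) (Suc k) + Stirling (Suc m) k)"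
    using split t2 t3 Suc.IH[of k] by simp
  also have "\<dots> = Stirling (Suc (Suc m)) (Suc k)"
    by (cases k) simp_all
  finally show ?case by simp
qed

lemma T_sum:
  "(\<Sum>i\<le>n. (Suc n choose i) * (fact k * Stirling i k)) = fact (Suc k) * Stirling (Suc n) (Suc k)"
proof -
  have "(\<Sum>i\<le>Suc n. (Suc n choose i) * (fact k * Stirling i k)) = fact k * (\<Sum>i\<le>Suc n. (Suc n choose i) * Stirling i k)"
    by (simp only: sum_distrib_left mult.left_commute)
  also have "\<dots> = fact k * Stirling (Suc (Suc n)) (Suc k)"
    by (simp only: Stirling_binom_sum[of "Suc n" k])
  also have "\<dots> = fact k * (Suc k * Stirling (Suc n) (Suc k)) + fact k * Stirling (Suc n) k"
    by (simp only: Stirling.simps(4) add_mult_distrib2)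
  finally have A: "(\<Sum>i\<le>Suc n. (Suc n choose i) * (fact k * Stirling i k))
      = fact k * (Suc k * Stirling (Suc n) (Suc k)) + fact k * Stirling (Suc n) k" .
  have B: "(\<Sum>i\<le>Suc n. (Suc n choose i) * (fact k * Stirling i k))
      = (\<Sum>i\<le>n. (Suc n choose i) * (fact k * Stirling i k)) + fact k * Stirling (Suc n) k"
    by (simp only: sum.atMost_Suc binomial_n_n mult_1)
  have "fact (Suc k) * Stirling (Suc n) (Suc k) = fact k * (Suc k * Stirling (Suc n) (Suc k))"
    by (simp only: fact_Suc) (simp add: algebra_simps)
  then show ?thesis using A B by simp
qed


definition Qp :: "nat \<Rightarrow> nat \<Rightarrow> rat poly" where
  "Qp m j = (\<Sum>a<m. monom (of_nat (Cnt m a j)) a)"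

lemma coeff_Qp: assumes m: "1 \<le> m" shows "coeff (Qp m j) a = of_nat (Cnt m a j)"
proof -
  have "coeff (Qp m j) a = (\<Sum>a'<m. if a' = a then of_nat (Cnt m a' j) else 0)"
    by (simp add: Qp_def coeff_sum coeff_monom)
  also have "\<dots> = (if a < m then of_nat (Cnt m a j) else 0)"
    by (simp add: sum.delta)
  also have "\<dots> = of_nat (Cnt m a j)"
    using Cnt_big[of m a j] m by auto
  finally show ?thesis .
qed

definition Qn :: "nat \<Rightarrow> nat \<Rightarrow> rat poly" where "Qn n k = Qp (n+1) (k+1)"

lemma Cnt_rec2:
  assumes k: "k \<le> n+1"
  shows "Cnt (n+2) a (k+1) = (if a = 0 then 0 else (\<Sum>k'<k. Cnt (n+1) (a-1) (k'+1)))
            + (\<Sum>k'\<in>{k..n}. Cnt (n+1) a (k'+1))"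
proof -
  let ?f = "\<lambda>j'. if j' < k+1 then (if a = 0 then 0 else Cnt (n+1) (a-1) j') else Cnt (n+1) a j'"
  have "Cnt (n+2) a (k+1) = (\<Sum>j'\<in>{1..n+1}. ?f j')"
    using Cnt_rec[of "n+1" "k+1" a] k by simp
  also have "{1..n+1} = {1..k} \<union> {k+1..n+1}" using k by auto
  also have "(\<Sum>j'\<in>{1..k} \<union> {k+1..n+1}. ?f j') = (\<Sum>j'\<in>{1..k}. ?f j') + (\<Sum>j'\<in>{k+1..n+1}. ?f j')"
    by (rule sum.union_disjoint) auto
  also have "(\<Sum>j'\<in>{1..k}. ?f j') = (\<Sum>k'<k. ?f (Suc k'))"
    by (simp only: One_nat_def sum.atLeast1_atMost_eq)
  also have "\<dots> = (if a = 0 then 0 else (\<Sum>k'<k. Cnt (n+1) (a-1) (k'+1)))"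
    by simp
  also have "(\<Sum>j'\<in>{k+1..n+1}. ?f j') = (\<Sum>k'\<in>{k..n}. ?f (Suc k'))"
    by (simp only: Suc_eq_plus1[symmetric] sum.shift_bounds_cl_Suc_ivl)
  also have "\<dots> = (\<Sum>k'\<in>{k..n}. Cnt (n+1) a (k'+1))"
    by (rule sum.cong) auto
  finally show ?thesis .
qed

lemma Qrec:
  assumes k: "k \<le> n+1"
  shows "Qn (n+1) k = pCons 0 (\<Sum>k'<k. Qn n k') + (\<Sum>k'\<in>{k..n}. Qn n k')"
proof (rule poly_eqI)
  fix a
  show "coeff (Qn (n+1) k) a = coeff (pCons 0 (\<Sum>k'<k. Qn n k') + (\<Sum>k'\<in>{k..n}. Qn n k')) a"
  proof (cases a)
    case 0
    then show ?thesis
      by (simp add: Qn_def coeff_Qp coeff_sum Cnt_rec2[OF k, of 0, simplified])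
  next
    case (Suc a')
    have "coeff (Qn (n+1) k) a = of_nat (Cnt (n+2) (Suc a') (k+1))"
      by (simp add: Qn_def coeff_Qp Suc)
    also have "\<dots> = of_nat ((\<Sum>k'<k. Cnt (n+1) a' (k'+1)) + (\<Sum>k'\<in>{k..n}. Cnt (n+1) (Suc a') (k'+1)))"
      using Cnt_rec2[OF k, of "Suc a'"] by simp
    also have "\<dots> = coeff (pCons 0 (\<Sum>k'<k. Qn n k') + (\<Sum>k'\<in>{k..n}. Qn n k')) a"
      by (simp add: Suc Qn_def coeff_Qp coeff_sum)
    finally show ?thesis .
  qed
qed


lemma smult_sum_right: "smult c (\<Sum>i\<in>A. f i) = (\<Sum>i\<in>A. smult c (f i))"
  by (induct A rule: infinite_finite_induct) (auto simp: smult_add_right)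

definition uu :: "rat poly" where "uu = [:-1, 1:]"

lemma uu_mult: "uu * p = pCons 0 p - p"
  by (simp add: uu_def)

lemma uu_nz: "uu \<noteq> 0" by (simp add: uu_def)

lemma uu_X: "uu = [:0,1:] - 1"
  by (simp add: uu_def one_pCons)

definition Lm :: "nat \<Rightarrow> rat poly \<Rightarrow> rat poly" where
  "Lm n p = (\<Sum>k\<le>n. smult (coeff p k) (Qn n k))"

lemma Lm_add: "Lm n (p + q) = Lm n p + Lm n q"
  by (simp add: Lm_def smult_add_left sum.distrib)

lemma Lm_smult: "Lm n (smult c p) = smult c (Lm n p)"
  by (simp add: Lm_def smult_sum_right)

lemma Lm_sum: "Lm n (\<Sum>i\<in>A. f i) = (\<Sum>i\<in>A. Lm n (f i))"
proof (induct A rule: infinite_finite_induct)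
  case (infinite A) then show ?case by (simp add: Lm_def)
next
  case empty then show ?case by (simp add: Lm_def)
next
  case (insert x F) then show ?case by (simp add: Lm_add)
qed

lemma Lm_monom: assumes "k \<le> n" shows "Lm n (monom 1 k) = Qn n k"
proof -
  have "Lm n (monom 1 k) = (\<Sum>ka\<le>n. if k = ka then Qn n ka else 0)"
    unfolding Lm_def by (rule sum.cong) (auto simp: coeff_monom)
  then show ?thesis using assms by (simp add: sum.delta)
qed

lemma Lm_one: "Lm n 1 = Qn n 0"
proof -
  have "(1::rat poly) = monom 1 0" by simp
  then show ?thesis using Lm_monom[of 0 n] by simp
qed

lemma Qdiff:
  assumes k: "k \<le> n"
  shows "Qn (n+1) (k+1) - Qn (n+1) k = uu * Qn n k"
proof -
  let ?A = "\<Sum>k'<k. Qn n k'" and ?B = "\<Sum>k'\<in>{Suc k..n}. Qn n k'"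
  have 1: "Qn (n+1) (k+1) = pCons 0 (?A + Qn n k) + ?B"
    using Qrec[of "k+1" n] k by simp
  have 2: "Qn (n+1) k = pCons 0 ?A + (Qn n k + ?B)"
    using Qrec[of k n] k by (simp add: sum.atLeast_Suc_atMost)
  have 3: "pCons 0 (?A + Qn n k) = pCons 0 ?A + pCons 0 (Qn n k)" by simp
  show ?thesis unfolding 1 2 3 uu_mult by simp
qed

lemma Lm_shift:
  assumes r: "degree r \<le> n"
  shows "Lm (n+1) (uu * r) = uu * Lm n r"
proof -
  let ?Q = "Qn (n+1)"
  have "Lm (n+1) (uu * r) = (\<Sum>k\<le>Suc n. smult (coeff (pCons 0 r) k) (?Q k)) - (\<Sum>k\<le>Suc n. smult (coeff r k) (?Q k))"
    by (simp add: Lm_def uu_mult smult_diff_left sum_subtractf)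
  also have "(\<Sum>k\<le>Suc n. smult (coeff (pCons 0 r) k) (?Q k)) = (\<Sum>k\<le>n. smult (coeff r k) (?Q (Suc k)))"
    by (simp only: sum.atMost_Suc_shift coeff_pCons_0 coeff_pCons_Suc smult_0_left add_0_left)
  also have "(\<Sum>k\<le>Suc n. smult (coeff r k) (?Q k)) = (\<Sum>k\<le>n. smult (coeff r k) (?Q k))"
    using r by (simp add: coeff_eq_0)
  also have "(\<Sum>k\<le>n. smult (coeff r k) (?Q (Suc k))) - (\<Sum>k\<le>n. smult (coeff r k) (?Q k))
      = (\<Sum>k\<le>n. smult (coeff r k) (?Q (Suc k) - ?Q k))"
    by (simp add: sum_subtractf smult_diff_right)
  also have "\<dots> = (\<Sum>k\<le>n. smult (coeff r k) (uu * Qn n k))"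
    by (rule sum.cong) (simp_all add: Qdiff[simplified])
  also have "\<dots> = uu * Lm n r"
    by (simp add: Lm_def sum_distrib_left)
  finally show ?thesis .
qed

lemma geom:
  "(\<Sum>k\<le>n. monom (1::rat) k) = (\<Sum>j\<le>n. smult (of_nat (Suc n choose Suc j)) (uu^j))"
proof -
  let ?X = "[:0,1:] :: rat poly"
  have "uu * (\<Sum>k\<le>n. monom (1::rat) k) = uu * (\<Sum>k<Suc n. ?X ^ k)"
    by (simp add: monom_altdef lessThan_Suc_atMost)
  also have "\<dots> = ?X ^ Suc n - 1"
    unfolding uu_X by (rule power_diff_1_eq[symmetric])
  finally have L: "uu * (\<Sum>k\<le>n. monom (1::rat) k) = ?X ^ Suc n - 1" .
  have "?X ^ Suc n = (uu + 1) ^ Suc n" by (simp add: uu_X)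
  also have "\<dots> = (\<Sum>k\<le>Suc n. of_nat (Suc n choose k) * uu ^ k * 1 ^ (Suc n - k))"
    by (rule binomial_ring)
  also have "\<dots> = 1 + (\<Sum>j\<le>n. of_nat (Suc n choose Suc j) * uu ^ Suc j)"
    by (simp only: power_one mult_1_right sum.atMost_Suc_shift binomial_n_0 of_nat_1 power_0)
  also have "(\<Sum>j\<le>n. of_nat (Suc n choose Suc j) * uu ^ Suc j) = uu * (\<Sum>j\<le>n. smult (of_nat (Suc n choose Suc j)) (uu^j))"
    by (simp add: sum_distrib_left of_nat_poly algebra_simps)
  finally have R: "uu * (\<Sum>j\<le>n. smult (of_nat (Suc n choose Suc j)) (uu^j)) = ?X ^ Suc n - 1" by simp
  from L R have "uu * (\<Sum>k\<le>n. monom (1::rat) k) = uu * (\<Sum>j\<le>n. smult (of_nat (Suc n choose Suc j)) (uu^j))"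
    by (simp only:)
  then show ?thesis using mult_left_cancel[OF uu_nz] by blast
qed

definition Gn :: "nat \<Rightarrow> nat \<Rightarrow> rat poly" where
  "Gn n b = (\<Sum>k\<le>n. smult (of_nat (fact k * Stirling b k)) (uu^(n-k)))"


lemma nat_comb:
  "(\<Sum>j\<le>n. (Suc n choose Suc j) * (fact k * Stirling (n-j) k)) = fact (Suc k) * Stirling (Suc n) (Suc k)"
proof -
  have "(\<Sum>j\<le>n. (Suc n choose Suc j) * (fact k * Stirling (n-j) k))
      = (\<Sum>i\<le>n. (Suc n choose Suc (n - i)) * (fact k * Stirling (n - (n-i)) k))"
    by (rule sum.reindex_bij_witness[where i="\<lambda>i. n-i" and j="\<lambda>i. n-i"]) auto
  also have "\<dots> = (\<Sum>i\<le>n. (Suc n choose i) * (fact k * Stirling i k))"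
  proof (rule sum.cong[OF refl])
    fix i assume i: "i \<in> {..n}"
    then have "Suc n choose Suc (n - i) = Suc n choose i"
      using binomial_symmetric[of i "Suc n"] by (simp add: Suc_diff_le)
    then show "(Suc n choose Suc (n - i)) * (fact k * Stirling (n - (n-i)) k) = (Suc n choose i) * (fact k * Stirling i k)"
      using i by simp
  qed
  also have "\<dots> = fact (Suc k) * Stirling (Suc n) (Suc k)" by (rule T_sum)
  finally show ?thesis .
qed

lemma Gn_comb:
  "(\<Sum>j\<le>n. smult (of_nat (Suc n choose Suc j)) (Gn n (n-j))) = Gn (Suc n) (Suc n)"
proof -
  have "(\<Sum>j\<le>n. smult (of_nat (Suc n choose Suc j)) (Gn n (n-j)))
      = (\<Sum>j\<le>n. \<Sum>k\<le>n. smult (of_nat ((Suc n choose Suc j) * (fact k * Stirling (n-j) k))) (uu^(n-k)))"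
    by (simp add: Gn_def smult_sum_right)
  also have "\<dots> = (\<Sum>k\<le>n. \<Sum>j\<le>n. smult (of_nat ((Suc n choose Suc j) * (fact k * Stirling (n-j) k))) (uu^(n-k)))"
    by (rule sum.swap)
  also have "\<dots> = (\<Sum>k\<le>n. smult (of_nat (\<Sum>j\<le>n. (Suc n choose Suc j) * (fact k * Stirling (n-j) k))) (uu^(n-k)))"
    by (simp only: of_nat_sum smult_sum)
  also have "\<dots> = (\<Sum>k\<le>n. smult (of_nat (fact (Suc k) * Stirling (Suc n) (Suc k))) (uu^(n-k)))"
    by (simp only: nat_comb)
  also have "\<dots> = Gn (Suc n) (Suc n)"
    unfolding Gn_def by (simp only: sum.atMost_Suc_shift Stirling.simps(3) mult_0_right of_nat_0 smult_0_left add_0_left diff_Suc_Suc)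
  finally show ?thesis .
qed

lemma Qp11: "Qp (Suc 0) (Suc 0) = 1"
proof -
  have c: "Cnt (Suc 0) 0 (Suc 0) = 1" using Cnt_1[of 0 1] by simp
  show ?thesis by (simp add: Qp_def c)
qed

lemma Qn00: "Qn 0 0 = 1" by (simp add: Qn_def Qp11)

lemma main_poly: "b \<le> n \<Longrightarrow> Lm n (uu^(n-b)) = Gn n b"
proof (induction n arbitrary: b)
  case 0
  have "Gn 0 0 = 1" by (simp add: Gn_def)
  then show ?case using 0 Lm_one[of 0] Qn00 by simp
next
  case (Suc n)
  show ?case
  proof (cases "b \<le> n")
    case True
    have e: "uu^(Suc n - b) = uu * uu^(n-b)" using True by (simp add: Suc_diff_le)
    have "degree (uu^(n-b)) \<le> degree uu * (n-b)" by (rule degree_power_le)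
    also have "degree uu = 1" by (simp add: uu_def)
    finally have dg: "degree (uu^(n-b)) \<le> n" by simp
    have "Lm (Suc n) (uu^(Suc n - b)) = uu * Gn n b"
      using Lm_shift[OF dg] Suc.IH[OF True] e by simp
    also have "\<dots> = Gn (Suc n) b"
    proof -
      have "Gn (Suc n) b = (\<Sum>k\<le>n. smult (of_nat (fact k * Stirling b k)) (uu^(Suc n-k)))"
        using True by (simp add: Gn_def)
      also have "\<dots> = (\<Sum>k\<le>n. uu * smult (of_nat (fact k * Stirling b k)) (uu^(n-k)))"
        by (rule sum.cong) (simp_all add: Suc_diff_le)
      also have "\<dots> = uu * Gn n b" by (simp add: Gn_def sum_distrib_left)
      finally show ?thesis by simp
    qed
    finally show ?thesis .
  next
    case False
    then have b: "b = Suc n" using Suc.prems by simp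
    have "Lm (Suc n) (uu^(Suc n - b)) = Qn (Suc n) 0" using b Lm_one[of "Suc n"] by simp
    also have "\<dots> = (\<Sum>k\<le>n. Qn n k)"
      using Qrec[of 0 n] by (simp add: atLeast0AtMost)
    also have "\<dots> = (\<Sum>k\<le>n. Lm n (monom 1 k))"
      by (rule sum.cong) (simp_all add: Lm_monom)
    also have "\<dots> = Lm n (\<Sum>k\<le>n. monom 1 k)" by (simp add: Lm_sum)
    also have "\<dots> = (\<Sum>j\<le>n. smult (of_nat (Suc n choose Suc j)) (Lm n (uu^j)))"
      by (simp add: geom Lm_sum Lm_smult)
    also have "\<dots> = (\<Sum>j\<le>n. smult (of_nat (Suc n choose Suc j)) (Gn n (n-j)))"
    proof (rule sum.cong[OF refl])
      fix j assume "j \<in> {..n}"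
      then have "Lm n (uu^(n - (n-j))) = Gn n (n-j)" by (intro Suc.IH) simp
      then show "smult (of_nat (Suc n choose Suc j)) (Lm n (uu^j)) = smult (of_nat (Suc n choose Suc j)) (Gn n (n-j))"
        using \<open>j \<in> {..n}\<close> by simp
    qed
    also have "\<dots> = Gn (Suc n) b" using b Gn_comb by simp
    finally show ?thesis .
  qed
qed


lemma coeff_uu_pow: "coeff (uu^m) a = (if a \<le> m then (-1)^(m-a) * of_nat (m choose a) else 0)"
proof (cases "a \<le> m")
  case True
  then show ?thesis unfolding uu_def by (simp add: coeff_linear_poly_power)
next
  case False
  have "degree (uu^m) \<le> degree uu * m" by (rule degree_power_le)
  also have "degree uu = 1" by (simp add: uu_def)
  finally have "degree (uu^m) < a" using False by simp
  then show ?thesis using False by (simp add: coeff_eq_0)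
qed

lemma S_entry:
  assumes a: "a < d+2" and b: "b < d+2"
  shows "S_mat d $$ (a,b) = coeff (uu^(d+1-b)) a"
proof -
  have "S_mat d $$ (a,b) = of_int ((if even (int d + 1 + (int a - 1) + (int b - 1)) then 1 else -1)
           * int (nat (int d - (int b - 1)) choose nat (int a - 1 + 1)))"
    using a b by (simp add: S_mat_def idx_mat_def)
  also have "nat (int d - (int b - 1)) = d + 1 - b" using b by simp
  also have "nat (int a - 1 + 1) = a" by simp
  finally have e: "S_mat d $$ (a,b) = of_int ((if even (int d + 1 + (int a - 1) + (int b - 1)) then 1 else -1)
           * int ((d + 1 - b) choose a))" .
  show ?thesis
  proof (cases "a \<le> d + 1 - b")
    case True
    define c where "c = d + 1 - b - a"
    have dc: "int d + 1 + (int a - 1) + (int b - 1) = int c + 2 * int a + 2 * int b - 2"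
      using True b unfolding c_def by simp
    have par: "even (int d + 1 + (int a - 1) + (int b - 1)) \<longleftrightarrow> even c"
      unfolding dc by presburger
    have "S_mat d $$ (a,b) = of_int ((if even c then 1 else -1) * int ((d + 1 - b) choose a))"
      unfolding e by (simp only: par)
    also have "\<dots> = (-1)^c * of_nat ((d + 1 - b) choose a)"
      by (cases "even c") (simp_all add: minus_one_power_iff)
    also have "\<dots> = coeff (uu^(d+1-b)) a"
      using True by (simp add: coeff_uu_pow c_def)
    finally show ?thesis .
  next
    case False
    then show ?thesis unfolding e coeff_uu_pow by simp
  qed
qed

lemma F_entry:
  assumes a: "a < d+2" and b: "b < d+2"
  shows "F_mat d $$ (a,b) = of_nat (fact a * Stirling b a)"
proof -
  have "F_mat d $$ (a,b) = of_int (fcoef (int a - 1) (int b - 1))"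
    using a b by (simp add: F_mat_def idx_mat_def)
  also have "fcoef (int a - 1) (int b - 1) = int (fact a * Stirling b a)"
  proof (cases "a = 0")
    case True
    then show ?thesis by (cases b) (simp_all add: fcoef_def)
  next
    case False
    show ?thesis
    proof (cases "b = 0")
      case True
      then show ?thesis using False by (simp add: fcoef_def)
    next
      case False2: False
      have "nat (int a - 1) + 1 = a" "nat (int b - 1) + 1 = b" using False False2 by auto
      then show ?thesis using False False2 unfolding fcoef_def by simp
    qed
  qed
  finally show ?thesis by simp
qed

lemma H_entry:
  assumes a: "a < d+2" and b: "b < d+2"
  shows "H_mat d $$ (a,b) = coeff (Qn (d+1) b) a"
proof -
  have "H_mat d $$ (a,b) = of_nat (Acount (d+2) (int a) (int (b+1)))"
    using a b by (simp add: H_mat_def idx_mat_def add.commute)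
  also have "Acount (d+2) (int a) (int (b+1)) = Cnt (d+2) a (b+1)"
  proof -
    have "{\<sigma>. \<sigma> permutes {1..d+2} \<and> int (des (d+2) \<sigma>) = int a \<and> int (\<sigma> 1) = int (b+1)}
        = {\<sigma>. \<sigma> permutes {1..d+2} \<and> des (d+2) \<sigma> = a \<and> \<sigma> 1 = b+1}" by auto
    then show ?thesis unfolding Acount_def Cnt_def by simp
  qed
  finally show ?thesis by (simp add: Qn_def coeff_Qp)
qed

lemma dimsS[simp]: "dim_row (S_mat d) = d+2" "dim_col (S_mat d) = d+2"
    "dim_row (F_mat d) = d+2" "dim_col (F_mat d) = d+2" "dim_row (H_mat d) = d+2" "dim_col (H_mat d) = d+2"
  by (simp_all add: S_mat_def F_mat_def H_mat_def idx_mat_def)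

lemma dims:
  "S_mat d \<in> carrier_mat (d+2) (d+2)" "F_mat d \<in> carrier_mat (d+2) (d+2)" "H_mat d \<in> carrier_mat (d+2) (d+2)"
  by (simp_all add: S_mat_def F_mat_def H_mat_def idx_mat_def)

lemma sum_lt_d2: fixes f :: "nat \<Rightarrow> 'a::comm_monoid_add" and d :: nat
  shows "(\<Sum>k\<in>{0..<d+2}. f k) = (\<Sum>k\<le>d+1. f k)"
  by (simp add: atLeast0LessThan lessThan_Suc_atMost)

lemma SF_eq_HS: "S_mat d * F_mat d = H_mat d * S_mat d"
proof (rule eq_matI)
  fix a b assume a: "a < dim_row (H_mat d * S_mat d)" and b: "b < dim_col (H_mat d * S_mat d)"
  then have a': "a < d+2" and b': "b < d+2" by auto
  have "(S_mat d * F_mat d) $$ (a,b) = (\<Sum>k\<in>{0..<d+2}. S_mat d $$ (a,k) * F_mat d $$ (k,b))"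
    using a' b' dims by (simp add: scalar_prod_def)
  also have "\<dots> = (\<Sum>k\<le>d+1. of_nat (fact k * Stirling b k) * coeff (uu^(d+1-k)) a)"
    unfolding sum_lt_d2
  proof (rule sum.cong[OF refl])
    fix k assume "k \<in> {..d+1}"
    then have k: "k < d+2" by simp
    show "S_mat d $$ (a,k) * F_mat d $$ (k,b) = of_nat (fact k * Stirling b k) * coeff (uu^(d+1-k)) a"
      using S_entry[OF a' k] F_entry[OF k b'] by simp
  qed
  also have "\<dots> = coeff (Gn (d+1) b) a"
    by (simp only: Gn_def coeff_sum coeff_smult)
  also have "\<dots> = coeff (Lm (d+1) (uu^(d+1-b))) a"
    using main_poly[of b "d+1"] b' by simp
  also have "\<dots> = (\<Sum>k\<le>d+1. coeff (Qn (d+1) k) a * coeff (uu^(d+1-b)) k)"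
    by (simp add: Lm_def coeff_sum mult.commute)
  also have "\<dots> = (\<Sum>k\<in>{0..<d+2}. H_mat d $$ (a,k) * S_mat d $$ (k,b))"
    unfolding sum_lt_d2
  proof (rule sum.cong[OF refl])
    fix k assume "k \<in> {..d+1}"
    then have k: "k < d+2" by simp
    show "coeff (Qn (d+1) k) a * coeff (uu^(d+1-b)) k = H_mat d $$ (a,k) * S_mat d $$ (k,b)"
      using S_entry[OF k b'] H_entry[OF a' k] by simp
  qed
  also have "\<dots> = (H_mat d * S_mat d) $$ (a,b)"
    using a' b' dims by (simp add: scalar_prod_def)
  finally show "(S_mat d * F_mat d) $$ (a,b) = (H_mat d * S_mat d) $$ (a,b)" .
qed auto


definition Binv :: "nat \<Rightarrow> rat mat" where
  "Binv d = mat (d+2) (d+2) (\<lambda>(b,c). of_nat (c choose (d+1-b)))"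

lemma pow_expand:
  assumes c: "c \<le> n"
  shows "(\<Sum>j\<le>n. smult (of_nat (c choose j)) (uu^j)) = [:0,1:]^c"
proof -
  have "[:0,1:]^c = (uu + 1)^c" by (simp add: uu_X)
  also have "\<dots> = (\<Sum>j\<le>c. of_nat (c choose j) * uu^j * 1^(c-j))" by (rule binomial_ring)
  also have "\<dots> = (\<Sum>j\<le>c. smult (of_nat (c choose j)) (uu^j))"
    by (simp add: of_nat_poly)
  also have "\<dots> = (\<Sum>j\<le>n. smult (of_nat (c choose j)) (uu^j))"
    by (rule sum.mono_neutral_left) (use c in auto)
  finally show ?thesis by simp
qed

lemma coeff_X_pow: "coeff ([:0,1:]^c :: rat poly) a = (if a = c then 1 else 0)"
proof -
  have "[:0,1:]^c = (monom 1 c :: rat poly)" by (simp add: monom_altdef)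
  then show ?thesis by (auto simp: coeff_monom)
qed

lemma S_Binv: "S_mat d * Binv d = 1\<^sub>m (d+2)"
proof (rule eq_matI)
  fix a c assume "a < dim_row (1\<^sub>m (d+2) :: rat mat)" "c < dim_col (1\<^sub>m (d+2) :: rat mat)"
  then have a: "a < d+2" and c: "c < d+2" by auto
  have "(S_mat d * Binv d) $$ (a,c) = (\<Sum>b\<in>{0..<d+2}. S_mat d $$ (a,b) * Binv d $$ (b,c))"
    using a c by (simp add: scalar_prod_def Binv_def)
  also have "\<dots> = (\<Sum>b\<le>d+1. coeff (smult (of_nat (c choose (d+1-b))) (uu^(d+1-b))) a)"
    unfolding sum_lt_d2
  proof (rule sum.cong[OF refl])
    fix b assume "b \<in> {..d+1}"
    then have b: "b < d+2" by simp
    show "S_mat d $$ (a,b) * Binv d $$ (b,c) = coeff (smult (of_nat (c choose (d+1-b))) (uu^(d+1-b))) a"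
      using S_entry[OF a b] b c by (simp add: Binv_def)
  qed
  also have "\<dots> = (\<Sum>j\<le>d+1. coeff (smult (of_nat (c choose j)) (uu^j)) a)"
    by (rule sum.reindex_bij_witness[where i="\<lambda>j. d+1-j" and j="\<lambda>j. d+1-j"]) auto
  also have "\<dots> = coeff (\<Sum>j\<le>d+1. smult (of_nat (c choose j)) (uu^j)) a"
    by (simp only: coeff_sum)
  also have "\<dots> = coeff ([:0,1:]^c) a"
    using pow_expand[of c "d+1"] c by (simp only:)
  also have "\<dots> = 1\<^sub>m (d+2) $$ (a,c)"
    using a c by (simp add: coeff_X_pow)
  finally show "(S_mat d * Binv d) $$ (a,c) = 1\<^sub>m (d+2) $$ (a,c)" .
qed (simp_all add: Binv_def)

theorem lemma2p5:
  fixes d :: nat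
  shows "invertible_mat (S_mat d) \<and>
    (\<forall>Sinv. inverts_mat (S_mat d) Sinv \<and> inverts_mat Sinv (S_mat d) \<longrightarrow>
       S_mat d * F_mat d * Sinv = H_mat d)"
proof
  have Bc: "Binv d \<in> carrier_mat (d+2) (d+2)" by (simp add: Binv_def)
  have SB: "S_mat d * Binv d = 1\<^sub>m (d+2)" by (rule S_Binv)
  have BS: "Binv d * S_mat d = 1\<^sub>m (d+2)"
    by (rule mat_mult_left_right_inverse[OF dims(1) Bc SB])
  show "invertible_mat (S_mat d)"
    unfolding invertible_mat_def inverts_mat_def using SB BS Bc
    by (auto intro!: exI[of _ "Binv d"])
  show "\<forall>Sinv. inverts_mat (S_mat d) Sinv \<and> inverts_mat Sinv (S_mat d) \<longrightarrow>
       S_mat d * F_mat d * Sinv = H_mat d"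
  proof (intro allI impI)
    fix Sinv assume "inverts_mat (S_mat d) Sinv \<and> inverts_mat Sinv (S_mat d)"
    then have i1: "S_mat d * Sinv = 1\<^sub>m (d+2)" and i2: "Sinv * S_mat d = 1\<^sub>m (dim_row Sinv)"
      by (auto simp: inverts_mat_def)
    have c1: "dim_col Sinv = d+2" using arg_cong[OF i1, of dim_col] by simp
    have c2: "dim_row Sinv = d+2" using arg_cong[OF i2, of dim_col] by simp
    have Sc: "Sinv \<in> carrier_mat (d+2) (d+2)" using c1 c2 by auto
    have "S_mat d * F_mat d * Sinv = H_mat d * S_mat d * Sinv" by (simp add: SF_eq_HS)
    also have "\<dots> = H_mat d * (S_mat d * Sinv)" by (rule assoc_mult_mat[OF dims(3) dims(1) Sc])
    also have "\<dots> = H_mat d" using i1 right_mult_one_mat[OF dims(3)] by simp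
    finally show "S_mat d * F_mat d * Sinv = H_mat d" .
  qed
qed


end
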